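(* Let $X$ be an infinite set and $\{X_0,\dots,X_n\}$ a partition of $X$. Let $(x_k)_{k\in\omega}$ and $(y_k)_{k\in\omega}$ be sequences in the Boolean group $[X]^{<\omega}$ such that the family $\{x_k:k\in\omega\}\cup\{y_k:k\in\omega\}$ (indexed by $k$ and by which sequence it comes from) is linearly independent, and such that for every $p\in\{0,\dots,n\}$ both families $\{x_k\cap X_p:k\in\omega\}$ and $\{y_k\cap X_p:k\in\omega\}$ are linearly independent. Then there exist a strictly increasing sequence $(k_m)_{m\in\omega}$ in $\omega$ and $n_0\in\{0,\dots,n\}$ such that the family $\{x_{k_m}\cap X_{n_0}:m\in\omega\}\cup\{y_{k_m}\cap X_{n_0}:m\in\omega\}$ is linearly independent.
   Context: For a set $X$, $[X]^{<\omega}$ denotes the set of finite subsets of $X$, regarded as a Boolean group (a vector space over the two-element field $2=\{0,1\}$) with symmetric difference $\triangle$ as operation and $\emptyset$ as neutral element. Linear independence is over the field $2$; a linearly independent indexed family has pairwise distinct members. *)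

theory Defs
  imports Main
begin

text \<open>Sum in the Boolean group of finite sets (operation: symmetric difference)
  of the members of an indexed family over a finite index set F:
  a point belongs to the sum iff it lies in an odd number of the summands.\<close>
definition bsum :: "('i \<Rightarrow> 'a set) \<Rightarrow> 'i set \<Rightarrow> 'a set" where
  "bsum f F = {a. odd (card {i \<in> F. a \<in> f i})}"

definition lin_indep :: "('i \<Rightarrow> 'a set) \<Rightarrow> bool" where
  "lin_indep f \<longleftrightarrow> (\<forall>F. finite F \<and> F \<noteq> {} \<longrightarrow> bsum f F \<noteq> {})"

definition join_fam :: "(nat \<Rightarrow> 'a set) \<Rightarrow> (nat \<Rightarrow> 'a set) \<Rightarrow> nat + nat \<Rightarrow> 'a set" where
  "join_fam x y s = (case s of Inl k \<Rightarrow> x k | Inr k \<Rightarrow> y k)"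

end

theory Submission
  imports Defs
begin

lemma bsum_empty[simp]: "bsum f {} = {}"
  by (simp add: bsum_def)

lemma bsum_insert:
  assumes "finite F" "s \<notin> F"
  shows "bsum f (insert s F) = (f s - bsum f F) \<union> (bsum f F - f s)"
proof -
  have "\<And>a. card {i \<in> insert s F. a \<in> f i} =
     (if a \<in> f s then Suc (card {i \<in> F. a \<in> f i}) else card {i \<in> F. a \<in> f i})"
  proof -
    fix a
    show "card {i \<in> insert s F. a \<in> f i} =
     (if a \<in> f s then Suc (card {i \<in> F. a \<in> f i}) else card {i \<in> F. a \<in> f i})"
    proof (cases "a \<in> f s")
      case True
      then have "{i \<in> insert s F. a \<in> f i} = insert s {i \<in> F. a \<in> f i}" by auto
      then show ?thesis using True assms by simp
    next
      case False
      then have "{i \<in> insert s F. a \<in> f i} = {i \<in> F. a \<in> f i}" by auto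
      then show ?thesis using False by simp
    qed
  qed
  then show ?thesis unfolding bsum_def by auto
qed

lemma bsum_subset: "bsum f F \<subseteq> \<Union>(f ` F)"
proof
  fix a assume "a \<in> bsum f F"
  then have "odd (card {i \<in> F. a \<in> f i})" by (simp add: bsum_def)
  then have "{i \<in> F. a \<in> f i} \<noteq> {}" by (metis card.empty even_zero)
  then show "a \<in> \<Union>(f ` F)" by auto
qed

lemma lin_indep_inj:
  assumes "lin_indep f" shows "inj f"
proof (rule injI, rule ccontr)
  fix i j assume e: "f i = f j" and ne: "i \<noteq> j"
  have "bsum f {i, j} = {}" using ne e by (simp add: bsum_insert)
  then show False using assms unfolding lin_indep_def by (metis finite.emptyI finite.insertI insert_not_empty)
qed

lemma core:
  fixes u v :: "nat \<Rightarrow> 'a set"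
  assumes iu: "inj u" and iv: "inj v"
    and fu: "\<And>k. finite (u k)" and fv: "\<And>k. finite (v k)"
    and inf: "infinite (\<Union>k. (u k - v k) \<union> (v k - u k))"
  shows "\<exists>km. strict_mono km \<and> lin_indep (join_fam (\<lambda>m. u (km m)) (\<lambda>m. v (km m)))"
proof -
  define zp where "zp k = (u k - v k) \<union> (v k - u k)" for k
  have avail: "\<exists>k>j. \<not> u k \<subseteq> S \<and> \<not> v k \<subseteq> S \<and> \<not> zp k \<subseteq> S" if "finite S" for j S
  proof -
    have A: "finite {k. u k \<subseteq> S}"
    proof (rule inj_on_finite[of u _ "Pow S"])
      show "inj_on u {k. u k \<subseteq> S}" using iu by (simp add: inj_on_def inj_def)
    qed (use that in auto)
    have B: "finite {k. v k \<subseteq> S}"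
    proof (rule inj_on_finite[of v _ "Pow S"])
      show "inj_on v {k. v k \<subseteq> S}" using iv by (simp add: inj_on_def inj_def)
    qed (use that in auto)
    have C: "infinite {k. \<not> zp k \<subseteq> S}"
    proof
      assume fC: "finite {k. \<not> zp k \<subseteq> S}"
      have "(\<Union>k. zp k) \<subseteq> S \<union> \<Union>(zp ` {k. \<not> zp k \<subseteq> S})" by blast
      moreover have "finite (S \<union> \<Union>(zp ` {k. \<not> zp k \<subseteq> S}))"
        using fC that fu fv by (auto simp: zp_def)
      ultimately show False using inf unfolding zp_def by (meson finite_subset)
    qed
    have "infinite ({k. \<not> zp k \<subseteq> S} - {k. u k \<subseteq> S} - {k. v k \<subseteq> S} - {..j})"
      using A B C by simp
    then obtain k where "k \<in> {k. \<not> zp k \<subseteq> S} - {k. u k \<subseteq> S} - {k. v k \<subseteq> S} - {..j}"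
      by (metis finite.emptyI ex_in_conv)
    then have "k>j \<and> \<not> u k \<subseteq> S \<and> \<not> v k \<subseteq> S \<and> \<not> zp k \<subseteq> S" by simp
    then show ?thesis by blast
  qed
  define nx where "nx j S = (SOME k. k>j \<and> \<not> u k \<subseteq> S \<and> \<not> v k \<subseteq> S \<and> \<not> zp k \<subseteq> S)" for j S
  have nx: "nx j S > j \<and> \<not> u (nx j S) \<subseteq> S \<and> \<not> v (nx j S) \<subseteq> S \<and> \<not> zp (nx j S) \<subseteq> S"
    if "finite S" for j S
    unfolding nx_def using someI_ex[OF avail[OF that, of j]] by blast
  define w where "w k = u k \<union> v k" for k
  define st where "st = rec_nat (nx 0 {}, w (nx 0 {}))
       (\<lambda>m p. (nx (fst p) (snd p), snd p \<union> w (nx (fst p) (snd p))))"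
  have st0: "st 0 = (nx 0 {}, w (nx 0 {}))" by (simp add: st_def)
  have stS: "st (Suc m) = (nx (fst (st m)) (snd (st m)), snd (st m) \<union> w (nx (fst (st m)) (snd (st m))))" for m
    by (simp add: st_def)
  define km where "km m = fst (st m)" for m
  have T: "snd (st m) = (\<Union>i\<le>m. w (km i))" for m
    by (induction m) (auto simp: st0 stS km_def atMost_Suc)
  have Tfin: "finite (snd (st m))" for m
    unfolding T w_def using fu fv by auto
  have kmS: "km (Suc m) = nx (km m) (snd (st m))" for m by (simp add: km_def stS)
  have km0: "km 0 = nx 0 {}" by (simp add: km_def st0)
  have sm: "strict_mono km"
    unfolding strict_mono_Suc_iff using nx Tfin by (simp add: kmS)
  define R where "R M = (\<Union>i<M. w (km i))" for M
  have good: "\<not> u (km M) \<subseteq> R M \<and> \<not> v (km M) \<subseteq> R M \<and> \<not> zp (km M) \<subseteq> R M" for M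
  proof (cases M)
    case 0
    then show ?thesis using nx[of "{}" 0] by (simp add: km0 R_def)
  next
    case (Suc m)
    then have "R M = snd (st m)" by (simp add: R_def T lessThan_Suc_atMost)
    then show ?thesis using nx[OF Tfin[of m], of "km m"] Suc by (simp add: kmS)
  qed
  define f where "f = join_fam (\<lambda>m. u (km m)) (\<lambda>m. v (km m))"
  define idx :: "nat + nat \<Rightarrow> nat" where "idx s = (case s of Inl i \<Rightarrow> i | Inr i \<Rightarrow> i)" for s
  have fw: "f s \<subseteq> w (km (idx s))" for s
    by (cases s) (auto simp: f_def join_fam_def idx_def w_def)
  have "lin_indep f"
    unfolding lin_indep_def
  proof (intro allI impI)
    fix F :: "(nat + nat) set" assume FF: "finite F \<and> F \<noteq> {}"
    define M where "M = Max (idx ` F)"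
    have Mle: "idx s \<le> M" if "s \<in> F" for s unfolding M_def using FF that by (intro Max_ge) auto
    have Min: "M \<in> idx ` F" unfolding M_def using FF by (intro Max_in) auto
    define G where "G = F - {Inl M, Inr M}"
    have fG: "finite G" using FF by (simp add: G_def)
    have BG: "bsum f G \<subseteq> R M"
    proof -
      have "\<Union>(f ` G) \<subseteq> R M"
      proof
        fix a assume "a \<in> \<Union>(f ` G)"
        then obtain s where s: "s \<in> G" "a \<in> f s" by auto
        have sF: "s \<in> F" "s \<noteq> Inl M" "s \<noteq> Inr M" using s(1) unfolding G_def by auto
        have "idx s \<noteq> M" using sF(2,3) unfolding idx_def by (cases s) auto
        then have "idx s < M" using Mle[OF sF(1)] by simp
        then have "w (km (idx s)) \<subseteq> R M" unfolding R_def by blast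
        then show "a \<in> R M" using fw[of s] s(2) by blast
      qed
      then show ?thesis using bsum_subset[of f G] by (meson order_trans)
    qed
    have fl: "f (Inl M) = u (km M)" and fr: "f (Inr M) = v (km M)"
      by (simp_all add: f_def join_fam_def)
    have GnL: "Inl M \<notin> G" and GnR: "Inr M \<notin> G" by (auto simp: G_def)
    show "bsum f F \<noteq> {}"
    proof (cases "Inl M \<in> F")
      case L: True
      show ?thesis
      proof (cases "Inr M \<in> F")
        case True
        then have "F = insert (Inl M) (insert (Inr M) G)" using L by (auto simp: G_def)
        then have e: "bsum f F = (u (km M) - ((v (km M) - bsum f G) \<union> (bsum f G - v (km M))))
            \<union> (((v (km M) - bsum f G) \<union> (bsum f G - v (km M))) - u (km M))"
          using fG GnL GnR by (simp add: bsum_insert fl fr)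
        obtain a where a: "a \<in> zp (km M)" "a \<notin> R M" using good[of M] by blast
        have "a \<notin> bsum f G" using a(2) BG by blast
        then have "a \<in> bsum f F" using a(1) unfolding e zp_def by auto
        then show ?thesis by blast
      next
        case False
        then have "F = insert (Inl M) G" using L by (auto simp: G_def)
        then have e: "bsum f F = (u (km M) - bsum f G) \<union> (bsum f G - u (km M))"
          using fG GnL by (simp add: bsum_insert fl)
        obtain a where a: "a \<in> u (km M)" "a \<notin> R M" using good[of M] by blast
        have "a \<notin> bsum f G" using a(2) BG by blast
        then have "a \<in> bsum f F" using a(1) unfolding e by auto
        then show ?thesis by blast
      qed
    next
      case NL: False
      then have R: "Inr M \<in> F" using Min by (auto simp: idx_def split: sum.splits)
      then have "F = insert (Inr M) G" using NL by (auto simp: G_def)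
      then have e: "bsum f F = (v (km M) - bsum f G) \<union> (bsum f G - v (km M))"
        using fG GnR by (simp add: bsum_insert fr)
      obtain a where a: "a \<in> v (km M)" "a \<notin> R M" using good[of M] by blast
      have "a \<notin> bsum f G" using a(2) BG by blast
      then have "a \<in> bsum f F" using a(1) unfolding e by auto
      then show ?thesis by blast
    qed
  qed
  then show ?thesis using sm unfolding f_def by blast
qed

lemma zinj:
  assumes li: "lin_indep (join_fam x y)"
  shows "inj (\<lambda>k. (x k - y k) \<union> (y k - x k))"
proof (rule injI, rule ccontr)
  fix i j assume e: "(x i - y i) \<union> (y i - x i) = (x j - y j) \<union> (y j - x j)" and ne: "i \<noteq> j"
  have e2: "\<And>a. (a \<in> x i \<longleftrightarrow> a \<notin> y i) \<longleftrightarrow> (a \<in> x j \<longleftrightarrow> a \<notin> y j)"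
  proof -
    fix a
    have "a \<in> (x i - y i) \<union> (y i - x i) \<longleftrightarrow> a \<in> (x j - y j) \<union> (y j - x j)" using e by simp
    then show "(a \<in> x i \<longleftrightarrow> a \<notin> y i) \<longleftrightarrow> (a \<in> x j \<longleftrightarrow> a \<notin> y j)" by auto
  qed
  define F where "F = {Inl i, Inr i, Inl j, Inr (j::nat)}"
  have "bsum (join_fam x y) F = (x i - ((y i - ((x j - y j) \<union> (y j - x j))) \<union> (((x j - y j) \<union> (y j - x j)) - y i)))
     \<union> (((y i - ((x j - y j) \<union> (y j - x j))) \<union> (((x j - y j) \<union> (y j - x j)) - y i)) - x i)"
    using ne unfolding F_def by (simp add: bsum_insert join_fam_def)
  also have "\<dots> = {}"
    apply (rule set_eqI)
    subgoal for a using e2[of a] by auto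
    done
  finally have "bsum (join_fam x y) F = {}" .
  then show False using li unfolding lin_indep_def F_def by auto
qed

lemma inj_Union_infinite:
  assumes "inj (z :: nat \<Rightarrow> 'a set)" shows "infinite (\<Union>k. z k)"
proof
  assume "finite (\<Union>k. z k)"
  then have "finite (Pow (\<Union>k. z k))" by simp
  moreover have "range z \<subseteq> Pow (\<Union>k. z k)" by blast
  ultimately have "finite (range z)" by (rule finite_subset[rotated])
  then have "finite (UNIV :: nat set)" using assms by (rule finite_imageD)
  then show False by simp
qed

theorem mainTheorem2:
  fixes X :: "'a set" and P :: "nat \<Rightarrow> 'a set" and n :: nat
    and x y :: "nat \<Rightarrow> 'a set"
  assumes "infinite X"
    and "\<And>p. p \<le> n \<Longrightarrow> P p \<noteq> {}"
    and "\<And>p q. p \<le> n \<Longrightarrow> q \<le> n \<Longrightarrow> p \<noteq> q \<Longrightarrow> P p \<inter> P q = {}"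
    and "(\<Union>p\<in>{0..n}. P p) = X"
    and "\<And>k. finite (x k) \<and> x k \<subseteq> X"
    and "\<And>k. finite (y k) \<and> y k \<subseteq> X"
    and "lin_indep (join_fam x y)"
    and "\<And>p. p \<le> n \<Longrightarrow> lin_indep (\<lambda>k. x k \<inter> P p) \<and> lin_indep (\<lambda>k. y k \<inter> P p)"
  shows "\<exists>km n0. strict_mono km \<and> n0 \<le> n \<and>
           lin_indep (join_fam (\<lambda>m. x (km m) \<inter> P n0) (\<lambda>m. y (km m) \<inter> P n0))"
proof -
  define z where "z k = (x k - y k) \<union> (y k - x k)" for k
  have inf: "infinite (\<Union>k. z k)" unfolding z_def by (rule inj_Union_infinite[OF zinj[OF assms(7)]])
  have "(\<Union>k. z k) \<subseteq> (\<Union>p\<in>{0..n}. \<Union>k. z k \<inter> P p)"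
  proof
    fix a assume "a \<in> (\<Union>k. z k)"
    then obtain k where k: "a \<in> z k" by blast
    then have "a \<in> X" using assms(5,6)[of k] unfolding z_def by blast
    then obtain p where "p \<in> {0..n}" "a \<in> P p" using assms(4) by blast
    then show "a \<in> (\<Union>p\<in>{0..n}. \<Union>k. z k \<inter> P p)" using k by blast
  qed
  then have "infinite (\<Union>p\<in>{0..n}. \<Union>k. z k \<inter> P p)" using inf by (meson finite_subset)
  then have "\<not> (\<forall>p\<in>{0..n}. finite (\<Union>k. z k \<inter> P p))"
    using finite_UN[of "{0..n}" "\<lambda>p. \<Union>k. z k \<inter> P p"] by simp
  then obtain p where p: "p \<in> {0..n}" "infinite (\<Union>k. z k \<inter> P p)" by blast
  have eq: "(\<Union>k. ((x k \<inter> P p) - (y k \<inter> P p)) \<union> ((y k \<inter> P p) - (x k \<inter> P p))) = (\<Union>k. z k \<inter> P p)"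
  proof -
    have "\<And>k. ((x k \<inter> P p) - (y k \<inter> P p)) \<union> ((y k \<inter> P p) - (x k \<inter> P p)) = z k \<inter> P p"
      unfolding z_def by blast
    then show ?thesis by simp
  qed
  have pn: "p \<le> n" using p(1) by simp
  have "\<exists>km. strict_mono km \<and> lin_indep (join_fam (\<lambda>m. x (km m) \<inter> P p) (\<lambda>m. y (km m) \<inter> P p))"
  proof (rule core)
    show "inj (\<lambda>k. x k \<inter> P p)" using assms(8)[OF pn] lin_indep_inj by blast
    show "inj (\<lambda>k. y k \<inter> P p)" using assms(8)[OF pn] lin_indep_inj by blast
    show "finite (x k \<inter> P p)" for k using assms(5)[of k] by blast
    show "finite (y k \<inter> P p)" for k using assms(6)[of k] by blast
    show "infinite (\<Union>k. ((x k \<inter> P p) - (y k \<inter> P p)) \<union> ((y k \<inter> P p) - (x k \<inter> P p)))"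
      unfolding eq by (rule p(2))
  qed
  then show ?thesis using pn by blast
qed

end
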